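(* In the situation of Lemma 7.1 (i.e. $X$ periodic, $e\in E(X)$, $Z_n=\{z\in Z(X):z^n\in H_e\}$, and $Z_\ell\setminus H_e$ infinite for some $\ell\in\mathbb N$), one can find a set $F'\subseteq X$ with at most two elements and an infinite set $A'\subseteq Z_\ell$ such that $A'A'\subseteq F'\cup H_e$ and $A'\cap F'X^1=\emptyset$.
   Context: Periodic: every element has an idempotent power. $E(X)$: idempotents; $H_e$: maximal subgroup containing $e$; $Z(X)$: center. $X^1=X\cup\{1\}$ with adjoined identity, $F'X^1=\{fx:f\in F',x\in X^1\}$, $A'A'=\{ab:a,b\in A'\}$. *)

theory Defs
  imports Main
begin

(* The semigroup X is the whole type 'a :: semigroup_mult. *)

fun spow :: "'a::semigroup_mult \<Rightarrow> nat \<Rightarrow> 'a" where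
  "spow x (Suc 0) = x"
| "spow x (Suc (Suc n)) = x * spow x (Suc n)"

definition idempotents :: "'a::semigroup_mult set" where
  "idempotents = {e. e * e = e}"

definition periodic_sg :: "'a::semigroup_mult itself \<Rightarrow> bool" where
  "periodic_sg _ \<longleftrightarrow> (\<forall>x::'a. \<exists>n\<ge>1. spow x n \<in> idempotents)"

(* maximal subgroup H_e containing the idempotent e: the group of units of eXe *)
definition maxsubgroup :: "'a::semigroup_mult \<Rightarrow> 'a set" where
  "maxsubgroup e = {x. e * x = x \<and> x * e = x \<and>
      (\<exists>y. e * y = y \<and> y * e = y \<and> x * y = e \<and> y * x = e)}"

definition center :: "'a::semigroup_mult set" where
  "center = {z. \<forall>x. z * x = x * z}"

definition Zset :: "'a::semigroup_mult \<Rightarrow> nat \<Rightarrow> 'a set" where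
  "Zset e n = {z \<in> center. spow z n \<in> maxsubgroup e}"

(* F X^1 = { f x : f in F, x in X \<union> {1} } = F \<union> F X *)
definition right_ideal1 :: "'a::semigroup_mult set \<Rightarrow> 'a set" where
  "right_ideal1 F = F \<union> {f * x | f x. f \<in> F}"

definition setprod :: "'a::semigroup_mult set \<Rightarrow> 'a set" where
  "setprod A = {a * b | a b. a \<in> A \<and> b \<in> A}"

end

theory Submission
  imports Defs "HOL-Library.Ramsey"
begin

lemma spow_one[simp]: "spow x 1 = x" by (simp add: One_nat_def)

lemma spow_Suc: "n \<ge> 1 \<Longrightarrow> spow x (Suc n) = x * spow x n"
  by (cases n) auto

lemma spow_add: "n \<ge> 1 \<Longrightarrow> m \<ge> 1 \<Longrightarrow> spow x n * spow x m = spow x (n + m)"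
proof (induction n rule: nat_induct_at_least)
  case base then show ?case using spow_Suc[of m x] by simp
next
  case (Suc n)
  then show ?case by (simp add: spow_Suc mult.assoc)
qed

lemma spow_Suc': "n \<ge> 1 \<Longrightarrow> spow x (Suc n) = spow x n * x"
  using spow_add[of n 1 x] by simp

lemma center_mult: "a \<in> center \<Longrightarrow> b \<in> center \<Longrightarrow> a * b \<in> center"
proof -
  assume a: "a \<in> center" and b: "b \<in> center"
  have "\<forall>x. a * b * x = x * (a * b)"
  proof
    fix x
    have "a * b * x = a * (b * x)" by (simp add: mult.assoc)
    also have "\<dots> = a * (x * b)" using b unfolding center_def by auto
    also have "\<dots> = (a * x) * b" by (simp add: mult.assoc)
    also have "\<dots> = (x * a) * b" using a unfolding center_def by auto
    finally show "a * b * x = x * (a * b)" by (simp add: mult.assoc)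
  qed
  then show ?thesis unfolding center_def by auto
qed

lemma centerD: "a \<in> center \<Longrightarrow> a * x = x * a"
  unfolding center_def by auto

lemma spow_center: assumes "a \<in> center" "n \<ge> 1" shows "spow a n \<in> center"
  using assms(2)
proof (induction n rule: nat_induct_at_least)
  case base then show ?case using assms by simp
next
  case (Suc n) then show ?case using assms by (simp add: spow_Suc center_mult)
qed

lemma spow_mult: assumes "a \<in> center" "n \<ge> 1" shows "spow (a * b) n = spow a n * spow b n"
  using assms(2)
proof (induction n rule: nat_induct_at_least)
  case base then show ?case by simp
next
  case (Suc n)
  have c: "spow a n \<in> center" using Suc spow_center assms by auto
  have "spow (a * b) (Suc n) = a * b * (spow a n * spow b n)" using Suc by (simp add: spow_Suc)
  also have "\<dots> = a * (b * spow a n) * spow b n" by (simp add: mult.assoc)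
  also have "\<dots> = a * (spow a n * b) * spow b n" using centerD[OF c] by simp
  also have "\<dots> = spow a (Suc n) * spow b (Suc n)" using Suc by (simp add: spow_Suc mult.assoc)
  finally show ?case .
qed

lemma H_unit: "x \<in> maxsubgroup e \<Longrightarrow> e * x = x \<and> x * e = x"
  unfolding maxsubgroup_def by auto

lemma H_mult: assumes "x \<in> maxsubgroup e" "y \<in> maxsubgroup e" shows "x * y \<in> maxsubgroup e"
proof -
  obtain x' where x: "e*x = x" "x*e = x" "e*x' = x'" "x'*e = x'" "x*x' = e" "x'*x = e"
    using assms(1) unfolding maxsubgroup_def by auto
  obtain y' where y: "e*y = y" "y*e = y" "e*y' = y'" "y'*e = y'" "y*y' = e" "y'*y = e"
    using assms(2) unfolding maxsubgroup_def by auto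
  have "x*y*(y'*x') = x*(y*y')*x'" by (simp add: mult.assoc)
  also have "\<dots> = e" using x y by (simp add: mult.assoc[symmetric])
  finally have 1: "x*y*(y'*x') = e" .
  have "(y'*x')*(x*y) = y'*(x'*x)*y" by (simp add: mult.assoc)
  also have "\<dots> = e" using x y by (simp add: mult.assoc[symmetric])
  finally have 2: "(y'*x')*(x*y) = e" .
  have a: "e*(x*y) = x*y" "(x*y)*e = x*y" "e*(y'*x') = y'*x'" "(y'*x')*e = y'*x'"
    using x y by (simp_all add: mult.assoc[symmetric]) (simp_all add: mult.assoc)
  show ?thesis unfolding maxsubgroup_def
    using 1 2 a by blast
qed

lemma spow_H: assumes "x \<in> maxsubgroup e" "n \<ge> 1" shows "spow x n \<in> maxsubgroup e"
  using assms(2)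
proof (induction n rule: nat_induct_at_least)
  case base then show ?case using assms by simp
next
  case (Suc n) then show ?case using assms by (simp add: spow_Suc H_mult)
qed

locale zsetup =
  fixes e :: "'a::semigroup_mult" and l :: nat
  assumes idem: "e * e = e" and l1: "l \<ge> 1"
begin

abbreviation "H \<equiv> maxsubgroup e"
abbreviation "Z \<equiv> Zset e l"

lemma ZD: "z \<in> Z \<Longrightarrow> z \<in> center \<and> spow z l \<in> H"
  unfolding Zset_def by auto

lemma criterion:
  assumes zc: "z \<in> center" and zl: "spow z l \<in> H" and ze: "z * e = z"
  shows "z \<in> H"
proof (cases "l = 1")
  case True then show ?thesis using zl by simp
next
  case False
  then have l2: "l - 1 \<ge> 1" and lS: "l = Suc (l - 1)" using l1 by auto
  obtain w where w: "e*w = w" "w*e = w" "spow z l * w = e" "w * spow z l = e"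
    using zl unfolding maxsubgroup_def by auto
  define q where "q = spow z (l - 1)"
  have qc: "q \<in> center" using spow_center[OF zc l2] q_def by simp
  have zq: "z * q = spow z l" using spow_Suc[OF l2, of z] lS q_def by simp
  define y where "y = q * w"
  have ez: "e * z = z" using centerD[OF zc, of e] ze by simp
  have "e * y = (e * q) * w" unfolding y_def by (simp add: mult.assoc)
  also have "\<dots> = (q * e) * w" using centerD[OF qc, of e] by simp
  also have "\<dots> = y" unfolding y_def using w(1) by (simp add: mult.assoc)
  finally have "e * y = y" .
  moreover have "y * e = y" unfolding y_def using w(2) by (simp add: mult.assoc)
  moreover have "z * y = e" unfolding y_def using zq w(3) by (simp add: mult.assoc[symmetric])
  moreover have "y * z = e"
  proof -
    have "y * z = q * (w * z)" unfolding y_def by (simp add: mult.assoc)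
    also have "\<dots> = q * (z * w)" using centerD[OF zc, of w] by simp
    also have "\<dots> = (z * q) * w" using centerD[OF qc, of z] by (simp add: mult.assoc[symmetric])
    also have "\<dots> = e" using zq w(3) by simp
    finally show ?thesis .
  qed
  ultimately show ?thesis unfolding maxsubgroup_def using ze ez by blast
qed

lemma Z_mult: assumes "a \<in> Z" "b \<in> Z" shows "a * b \<in> Z"
proof -
  have "a \<in> center" "b \<in> center" "spow a l \<in> H" "spow b l \<in> H" using assms unfolding Zset_def by auto
  then have "a * b \<in> center" "spow (a*b) l \<in> H" using center_mult spow_mult[of a l b] H_mult l1 by auto
  then show ?thesis unfolding Zset_def by auto
qed

lemma Z_ideal: assumes "z \<in> Z" "h \<in> Z" "h \<in> H" shows "z * h \<in> H" "h * z \<in> H"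
proof -
  have zh: "z * h \<in> Z" using Z_mult assms by auto
  have "z * h * e = z * h" using H_unit[OF assms(3)] by (simp add: mult.assoc)
  then show "z * h \<in> H" using criterion zh ZD by blast
  moreover have "z * h = h * z" using centerD ZD assms by blast
  ultimately show "h * z \<in> H" by simp
qed

lemma spow_Z: assumes "z \<in> Z" "n \<ge> 1" shows "spow z n \<in> Z"
  using assms(2)
proof (induction n rule: nat_induct_at_least)
  case base then show ?case using assms by simp
next
  case (Suc n) then show ?case using assms by (simp add: spow_Suc Z_mult)
qed

lemma spow_ge_H: assumes "z \<in> Z" "n \<ge> l" shows "spow z n \<in> H"
proof (cases "n = l")
  case True then show ?thesis using ZD assms by auto
next
  case False
  then have "spow z n = spow z (n - l) * spow z l" using spow_add[of "n-l" l z] l1 assms by simp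
  moreover have "spow z (n - l) \<in> Z" using spow_Z assms False by simp
  moreover have "spow z l \<in> Z" using spow_Z assms l1 by simp
  ultimately show ?thesis using Z_ideal(1) ZD assms by simp
qed

lemma notdiv1:
  assumes w: "w \<in> Z" "w \<notin> H" and b: "b \<in> Z"
  shows "w \<noteq> w * b \<and> (\<forall>x. w \<noteq> w * b * x)"
proof (intro conjI allI notI)
  have wc: "w \<in> center" and wl: "spow w l \<in> H" using ZD w by auto
  have blc: "spow b l \<in> center" and blH: "spow b l \<in> H" using ZD b spow_center l1 by auto
  {
    fix x assume eq: "w = w * b * x"
    have "\<forall>n\<ge>1. w = w * spow b n * spow x n"
    proof (intro allI impI)
      fix n :: nat assume "n \<ge> 1"
      then show "w = w * spow b n * spow x n"
      proof (induction n rule: nat_induct_at_least)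
        case base then show ?case using eq by simp
      next
        case (Suc n)
        have bc: "spow b n \<in> center" using spow_center ZD b Suc by auto
        have "w = w * spow b n * spow x n" by (rule Suc.IH)
        also have "\<dots> = w * b * x * spow b n * spow x n" by (subst (1) eq) (rule refl)
        finally have "w = w * b * x * spow b n * spow x n" .
        also have "\<dots> = w * b * (x * spow b n) * spow x n" by (simp add: mult.assoc)
        also have "\<dots> = w * b * (spow b n * x) * spow x n" using centerD[OF bc] by simp
        also have "\<dots> = w * spow b (Suc n) * spow x (Suc n)" using Suc by (simp add: spow_Suc mult.assoc)
        finally show ?case .
      qed
    qed
    then have 1: "w = w * spow b l * spow x l" using l1 by auto
    have c: "w * spow x l * spow b l = w"
    proof -
      have "w * spow x l * spow b l = w * (spow b l * spow x l)" using centerD[OF blc] by (simp add: mult.assoc)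
      also have "\<dots> = w" using 1 by (simp add: mult.assoc)
      finally show ?thesis .
    qed
    have "w * e = w * spow x l * spow b l * e" using c by simp
    also have "\<dots> = w * spow x l * (spow b l * e)" by (simp add: mult.assoc)
    also have "\<dots> = w" using H_unit[OF blH] c by simp
    finally have "w * e = w" .
    then have "w \<in> H" using criterion wc wl by blast
    then show False using w by simp
  }
  assume eq: "w = w * b"
  have "\<forall>n\<ge>1. w = w * spow b n"
  proof (intro allI impI)
    fix n :: nat assume "n \<ge> 1"
    then show "w = w * spow b n"
    proof (induction n rule: nat_induct_at_least)
      case base then show ?case using eq by simp
    next
      case (Suc n)
      have "w * spow b (Suc n) = (w * b) * spow b n" using Suc by (simp add: spow_Suc mult.assoc)
      also have "\<dots> = w" using eq[symmetric] Suc by simp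
      finally show ?case by simp
    qed
  qed
  then have "w = w * spow b l" using l1 by auto
  then have "w * e = (w * spow b l) * e" by simp
  also have "\<dots> = w * (spow b l * e)" by (simp add: mult.assoc)
  also have "\<dots> = w" using H_unit[OF blH] \<open>w = w * spow b l\<close> by simp
  finally have "w * e = w" .
  then have "w \<in> H" using criterion wc wl by blast
  then show False using w by simp
qed

lemma notdivH:
  assumes w: "w \<in> Z" "w \<notin> H" and f: "f \<in> H"
  shows "w \<noteq> f \<and> (\<forall>x. w \<noteq> f * x)"
proof (intro conjI allI notI)
  have wc: "w \<in> center" and wl: "spow w l \<in> H" using ZD w by auto
  show False if "w = f" using that f w by simp
  fix x assume eq: "w = f * x"
  have "e * w = (e * f) * x" using eq by (simp add: mult.assoc)
  then have "e * w = w" using eq H_unit[OF f] by simp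
  then have "w * e = w" using centerD[OF wc, of e] by simp
  then have "w \<in> H" using criterion wc wl by blast
  then show False using w by simp
qed

lemma notdiv:
  assumes w: "w \<in> Z" "w \<notin> H" and F: "\<forall>f\<in>F. f \<in> H \<or> (\<exists>b\<in>Z. f = w * b)"
  shows "w \<notin> right_ideal1 F"
proof
  assume "w \<in> right_ideal1 F"
  then obtain f where f: "f \<in> F" and "w = f \<or> (\<exists>x. w = f * x)"
    unfolding right_ideal1_def by auto
  moreover have "f \<in> H \<or> (\<exists>b\<in>Z. f = w * b)" using F f by auto
  ultimately show False
  proof (elim disjE exE bexE)
    assume "w = f" "f \<in> H" then show False using notdivH[OF w] by blast
  next
    fix b assume "w = f" "b \<in> Z" "f = w * b" then show False using notdiv1[OF w] by metis
  next
    fix x assume "w = f * x" "f \<in> H" then show False using notdivH[OF w] by blast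
  next
    fix x b assume h: "w = f * x" "b \<in> Z" "f = w * b"
    then have "w = w * b * x" by simp
    then show False using notdiv1[OF w h(2)] by blast
  qed
qed

end


context zsetup begin

definition GOAL :: bool where
  "GOAL \<longleftrightarrow> (\<exists>F' A'. F' \<subseteq> (UNIV :: 'a set) \<and> finite F' \<and> card F' \<le> 2 \<and>
           infinite A' \<and> A' \<subseteq> Z \<and> setprod A' \<subseteq> F' \<union> H \<and> A' \<inter> right_ideal1 F' = {})"

lemma finish:
  assumes A: "A \<subseteq> Z - H" "infinite A" and F: "finite F" "card F \<le> 2"
    and prod: "\<forall>a\<in>A. \<forall>b\<in>A. a * b \<in> F \<union> H"
    and div: "\<forall>w\<in>A. \<forall>f\<in>F. f \<in> H \<or> (\<exists>b\<in>Z. f = w * b)"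
  shows GOAL
proof -
  have "setprod A \<subseteq> F \<union> H" using prod unfolding setprod_def by auto
  moreover have "A \<inter> right_ideal1 F = {}" using notdiv div A(1) by blast
  ultimately show ?thesis unfolding GOAL_def using A F by blast
qed

lemma case1: assumes "infinite (Z \<inter> H)" shows GOAL
proof -
  have "setprod (Z \<inter> H) \<subseteq> {} \<union> H" unfolding setprod_def using Z_ideal(1) by auto
  moreover have "right_ideal1 {} = {}" unfolding right_ideal1_def by auto
  ultimately show ?thesis unfolding GOAL_def using assms by (intro exI[of _ "{}"] exI[of _ "Z \<inter> H"]) auto
qed

lemma case2a:
  assumes fin: "finite (Z \<inter> H)" and b: "b \<in> Z" and inf: "infinite ((\<lambda>z. b * z) ` Z)"
  shows GOAL
proof -
  define S where "S = {m. 1 \<le> m \<and> infinite ((\<lambda>z. spow b m * z) ` Z)}"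
  have Ssub: "S \<subseteq> {1..<l}"
  proof
    fix m assume m: "m \<in> S"
    show "m \<in> {1..<l}"
    proof (rule ccontr)
      assume "m \<notin> {1..<l}"
      then have ml: "m \<ge> l" using m S_def by auto
      have "spow b m \<in> H" using spow_ge_H[OF b ml] .
      moreover have "spow b m \<in> Z" using spow_Z b ml l1 by simp
      ultimately have "(\<lambda>z. spow b m * z) ` Z \<subseteq> Z \<inter> H" using Z_ideal(2) Z_mult by auto
      then have "finite ((\<lambda>z. spow b m * z) ` Z)" using fin finite_subset by blast
      then show False using m S_def by auto
    qed
  qed
  then have finS: "finite S" using finite_subset by blast
  have "1 \<in> S" using inf S_def by simp
  define m where "m = Max S"
  have mS: "m \<in> S" using Max_in finS \<open>1 \<in> S\<close> m_def by auto
  then have m1: "m \<ge> 1" and minf: "infinite ((\<lambda>z. spow b m * z) ` Z)" using S_def by auto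
  have "m + m \<notin> S" using Max_ge[OF finS, of "m+m"] m_def m1 by auto
  then have fin2: "finite ((\<lambda>z. spow b (m+m) * z) ` Z)" using S_def m1 by auto
  define c where "c = spow b m"
  have cZ: "c \<in> Z" using spow_Z b m1 c_def by simp
  have cc: "c * c = spow b (m+m)" using spow_add m1 c_def by simp
  define W where "W = (\<lambda>z. c * z) ` Z"
  have Winf: "infinite W" using minf W_def c_def by simp
  have "(\<lambda>w. w * c) ` W \<subseteq> (\<lambda>z. spow b (m+m) * z) ` Z"
  proof
    fix v assume "v \<in> (\<lambda>w. w * c) ` W"
    then obtain z where z: "z \<in> Z" "v = c * z * c" using W_def by auto
    have "c * z * c = c * (z * c)" by (simp add: mult.assoc)
    also have "\<dots> = c * (c * z)" using centerD[of z c] ZD[OF z(1)] by simp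
    also have "\<dots> = spow b (m+m) * z" using cc by (simp add: mult.assoc[symmetric])
    finally show "v \<in> (\<lambda>z. spow b (m+m) * z) ` Z" using z by auto
  qed
  then have "finite ((\<lambda>w. w * c) ` W)" using fin2 finite_subset by blast
  then obtain w0 where w0: "w0 \<in> W" and A0inf: "infinite {w \<in> W. w * c = w0 * c}"
    using pigeonhole_infinite[OF Winf] by blast
  define A0 where "A0 = {w \<in> W. w * c = w0 * c}"
  define p where "p = w0 * c"
  define zf where "zf = (\<lambda>w. SOME z. z \<in> Z \<and> w = c * z)"
  have zf: "zf w \<in> Z \<and> w = c * zf w" if "w \<in> W" for w
  proof -
    have "\<exists>z. z \<in> Z \<and> w = c * z" using that W_def by auto
    then show ?thesis unfolding zf_def by (rule someI_ex)
  qed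
  have WZ: "W \<subseteq> Z" using W_def Z_mult cZ by auto
  have prod1: "w * w' = p * zf w'" if "w \<in> A0" "w' \<in> A0" for w w'
  proof -
    have "w * w' = w * (c * zf w')" using zf that A0_def by auto
    also have "\<dots> = (w * c) * zf w'" by (simp add: mult.assoc)
    also have "\<dots> = p * zf w'" using that A0_def p_def by simp
    finally show ?thesis .
  qed
  have comm: "w * w' = w' * w" if "w \<in> A0" "w' \<in> A0" for w w'
  proof -
    have "w \<in> Z" using that A0_def WZ by auto
    then show ?thesis using centerD ZD by blast
  qed
  have w0A: "w0 \<in> A0" using w0 A0_def by simp
  define r where "r = p * zf w0"
  have allr: "w * w' = r" if "w \<in> A0" "w' \<in> A0" for w w'
  proof -
    have "w * w' = p * zf w'" using prod1 that by simp
    also have "\<dots> = w0 * w'" using prod1 that w0A by simp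
    also have "\<dots> = w' * w0" using comm that w0A by simp
    also have "\<dots> = r" using prod1 that w0A r_def by simp
    finally show ?thesis .
  qed
  define A where "A = A0 - H"
  have "A0 \<inter> H \<subseteq> Z \<inter> H" using WZ A0_def by auto
  then have "finite (A0 \<inter> H)" using fin finite_subset by blast
  moreover have "A = A0 - (A0 \<inter> H)" using A_def by auto
  ultimately have Ainf: "infinite A" using A0inf A0_def Diff_infinite_finite by metis
  have AZ: "A \<subseteq> Z - H" using A_def A0_def WZ by auto
  show ?thesis
  proof (rule finish[OF AZ Ainf, of "{r}"])
    show "\<forall>a\<in>A. \<forall>b\<in>A. a * b \<in> {r} \<union> H" using allr A_def by auto
    show "\<forall>w\<in>A. \<forall>f\<in>{r}. f \<in> H \<or> (\<exists>b\<in>Z. f = w * b)"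
      using allr A_def AZ by auto
  qed auto
qed

end

definition homog :: "(nat \<Rightarrow> nat \<Rightarrow> nat \<Rightarrow> bool) \<Rightarrow> nat set \<Rightarrow> bool" where
  "homog P Y \<longleftrightarrow> (\<forall>i\<in>Y. \<forall>j\<in>Y. \<forall>k\<in>Y. i < j \<longrightarrow> j < k \<longrightarrow> P i j k) \<or>
                 (\<forall>i\<in>Y. \<forall>j\<in>Y. \<forall>k\<in>Y. i < j \<longrightarrow> j < k \<longrightarrow> \<not> P i j k)"
lemma homog_mono: "homog P Y \<Longrightarrow> Y' \<subseteq> Y \<Longrightarrow> homog P Y'"
  unfolding homog_def by blast

lemma ord3:
  fixes i j k i' j' k' :: nat
  assumes "i < j" "j < k" "i' < j'" "j' < k'" "{i,j,k} = {i',j',k'}"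
  shows "i = i' \<and> j = j' \<and> k = k'"
proof -
  have "i' \<in> {i,j,k}" "j' \<in> {i,j,k}" "k' \<in> {i,j,k}" "i \<in> {i',j',k'}" "j \<in> {i',j',k'}" "k \<in> {i',j',k'}"
    using assms(5) by blast+
  note 1 = this
  have ii: "i = i'" using assms(1-4) 1(1,4) by auto
  have kk: "k = k'" using assms(1-4) 1(3,6) by auto
  have "j = j'" using assms(1-4) 1(2,5) ii kk by auto
  then show ?thesis using ii kk by simp
qed
lemma ramsey3_bool:
  assumes "infinite (Y0 :: nat set)"
  shows "\<exists>Y\<subseteq>Y0. infinite Y \<and> homog P Y"
proof -
  define f where "f X = (if \<exists>i j k. X = {i,j,k} \<and> i < j \<and> j < k \<and> P i j k then 0 else (1::nat))" for X
  have bound: "\<forall>X. X \<subseteq> Y0 \<and> finite X \<and> card X = 3 \<longrightarrow> f X < 2" unfolding f_def by simp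
  obtain Y t where Y: "Y \<subseteq> Y0" "infinite Y" "t < 2"
    and h: "\<forall>X. X \<subseteq> Y \<and> finite X \<and> card X = 3 \<longrightarrow> f X = t"
    using Ramsey[OF assms bound] by blast
  have ft: "f {i,j,k} = t" if "i \<in> Y" "j \<in> Y" "k \<in> Y" "i < j" "j < k" for i j k
  proof -
    have "{i,j,k} \<subseteq> Y" "finite {i,j,k}" "card {i,j,k} = 3" using that by auto
    then show ?thesis using h by blast
  qed
  have fP: "f {i,j,k} = 0 \<longleftrightarrow> P i j k" if "i < j" "j < k" for i j k
  proof
    assume f0: "f {i,j,k} = 0"
    have "\<exists>i' j' k'. {i,j,k} = {i',j',k'} \<and> i' < j' \<and> j' < k' \<and> P i' j' k'"
    proof (rule ccontr)
      assume "\<not> ?thesis"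
      then have "f {i,j,k} = 1" unfolding f_def by (simp only: if_False)
      then show False using f0 by simp
    qed
    then obtain i' j' k' where "{i,j,k} = {i',j',k'}" "i' < j'" "j' < k'" "P i' j' k'"
      by blast
    then show "P i j k" using ord3[OF that] by metis
  next
    assume "P i j k"
    then have "\<exists>i' j' k'. {i,j,k} = {i',j',k'} \<and> i' < j' \<and> j' < k' \<and> P i' j' k'" using that by blast
    then show "f {i,j,k} = 0" unfolding f_def by (rule if_P)
  qed
  have "homog P Y"
  proof (cases "t = 0")
    case True
    have "\<forall>i\<in>Y. \<forall>j\<in>Y. \<forall>k\<in>Y. i < j \<longrightarrow> j < k \<longrightarrow> P i j k"
    proof (intro ballI impI)
      fix i j k assume "i \<in> Y" "j \<in> Y" "k \<in> Y" "i < j" "j < k"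
      then show "P i j k" using ft fP True by metis
    qed
    then show ?thesis unfolding homog_def by blast
  next
    case False
    have "\<forall>i\<in>Y. \<forall>j\<in>Y. \<forall>k\<in>Y. i < j \<longrightarrow> j < k \<longrightarrow> \<not> P i j k"
    proof (intro ballI impI)
      fix i j k assume "i \<in> Y" "j \<in> Y" "k \<in> Y" "i < j" "j < k"
      then show "\<not> P i j k" using ft fP False by metis
    qed
    then show ?thesis unfolding homog_def by blast
  qed
  then show ?thesis using Y by blast
qed
lemma ramsey3_family:
  fixes P :: "'j \<Rightarrow> nat \<Rightarrow> nat \<Rightarrow> nat \<Rightarrow> bool"
  assumes "finite J" "infinite (Y0 :: nat set)"
  shows "\<exists>Y\<subseteq>Y0. infinite Y \<and> (\<forall>p\<in>J. homog (P p) Y)"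
  using assms(1)
proof (induction J rule: finite_induct)
  case empty then show ?case using assms(2) by blast
next
  case (insert p J)
  then obtain Y1 where Y1: "Y1 \<subseteq> Y0" "infinite Y1" "\<forall>q\<in>J. homog (P q) Y1" by blast
  then obtain Y2 where Y2: "Y2 \<subseteq> Y1" "infinite Y2" "homog (P p) Y2" using ramsey3_bool by blast
  have "\<forall>q\<in>insert p J. homog (P q) Y2" using Y1(3) Y2 homog_mono by blast
  then show ?case using Y1 Y2 by blast
qed



lemma swap4: assumes "b \<in> center" shows "(a*b)*(c*b) = (a*c)*(b*b)"
proof -
  have "(a*b)*(c*b) = a*((b*c)*b)" by (simp add: mult.assoc)
  also have "\<dots> = a*((c*b)*b)" using centerD[OF assms, of c] by simp
  also have "\<dots> = (a*c)*(b*b)" by (simp add: mult.assoc)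
  finally show ?thesis .
qed

context zsetup begin

lemma case2b:
  assumes fin: "finite (Z \<inter> H)" and allfin: "\<forall>b\<in>Z. finite ((\<lambda>z. b * z) ` Z)"
    and infT: "infinite (Z - H)"
  shows GOAL
proof -
  obtain y :: "nat \<Rightarrow> 'a" where y: "inj y" "range y \<subseteq> Z - H"
    using infinite_countable_subset[OF infT] by blast
  have yZ: "y i \<in> Z" and yH: "y i \<notin> H" for i using y by auto
  have yc: "spow (y i) n \<in> center" if "n \<ge> 1" for i n using spow_Z[OF yZ that] ZD by blast
  have l2: "l \<ge> 2"
  proof (rule ccontr)
    assume "\<not> l \<ge> 2"
    then have "l = 1" using l1 by simp
    then have "y 0 \<in> H" using ZD[OF yZ[of 0]] by simp
    then show False using yH by blast
  qed
  define Rp where "Rp i a s k = (if s = 0 then spow (y i) a else spow (y i) a * spow (y k) s)" for i a s k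
  define B where "B = {1..<l} \<times> {0..<l}"
  have finB: "finite B" unfolding B_def by simp
  define P where "P q i j k = (case q of None \<Rightarrow> y i * y j = y i * y k
      | Some (a,s) \<Rightarrow> Rp i a s k = Rp j a s k)" for q i j k
  obtain Y where Yinf: "infinite Y" and Yh: "\<forall>q\<in>insert None (Some ` B). homog (P q) Y"
    using ramsey3_family[of "insert None (Some ` B)" UNIV P] finB by auto
  have unb: "\<exists>k\<in>Y. i < k" for i using Yinf infinite_nat_iff_unbounded by auto
  have Q0: "\<forall>i\<in>Y. \<forall>j\<in>Y. \<forall>k\<in>Y. i < j \<longrightarrow> j < k \<longrightarrow> y i * y j = y i * y k"
  proof -
    have "homog (P None) Y" using Yh by auto
    moreover have "\<not> (\<forall>i\<in>Y. \<forall>j\<in>Y. \<forall>k\<in>Y. i < j \<longrightarrow> j < k \<longrightarrow> \<not> P None i j k)"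
    proof
      assume neg: "\<forall>i\<in>Y. \<forall>j\<in>Y. \<forall>k\<in>Y. i < j \<longrightarrow> j < k \<longrightarrow> \<not> P None i j k"
      obtain i where i: "i \<in> Y" using unb by blast
      define U where "U = {j \<in> Y. i < j}"
      have "U = Y - {..i}" unfolding U_def by auto
      then have Uinf: "infinite U" using Yinf by simp
      have "inj_on (\<lambda>j. y i * y j) U"
      proof (rule inj_onI)
        fix j k assume jk: "j \<in> U" "k \<in> U" "y i * y j = y i * y k"
        show "j = k"
        proof (rule ccontr)
          assume "j \<noteq> k"
          then consider "j < k" | "k < j" by linarith
          then show False
          proof cases
            case 1 then show False using neg i jk unfolding U_def P_def by auto
          next
            case 2
            have "k \<in> Y" "j \<in> Y" "i < k" using jk unfolding U_def by auto
            then have "\<not> P None i k j" using neg i 2 by blast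
            then show False using jk(3) unfolding P_def by simp
          qed
        qed
      qed
      moreover have "(\<lambda>j. y i * y j) ` U \<subseteq> (\<lambda>z. y i * z) ` Z" using yZ by auto
      then have "finite ((\<lambda>j. y i * y j) ` U)" using allfin yZ finite_subset by blast
      ultimately have "finite U" using finite_imageD by blast
      then show False using Uinf by simp
    qed
    ultimately show ?thesis unfolding homog_def P_def by auto
  qed
  have rep1: "y i * y j = y i * y k" if "i \<in> Y" "j \<in> Y" "k \<in> Y" "i < j" "i < k" for i j k
  proof -
    consider "j < k" | "j = k" | "k < j" by linarith
    then show ?thesis
    proof cases
      case 1 then show ?thesis using Q0 that by blast
    next
      case 2 then show ?thesis by simp
    next
      case 3 then show ?thesis using Q0 that by metis
    qed
  qed
  have rep0: "spow (y i) a * y j = spow (y i) a * y k"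
    if "i \<in> Y" "j \<in> Y" "k \<in> Y" "i < j" "i < k" "a \<ge> 1" for i j k a
  proof (cases "a = 1")
    case True then show ?thesis using rep1[OF that(1-5)] by simp
  next
    case False
    then have a1: "a - 1 \<ge> 1" and aS: "a = Suc (a - 1)" using that(6) by auto
    then have sa: "spow (y i) a = spow (y i) (a - 1) * y i" using spow_Suc'[OF a1, of "y i"] by simp
    have "spow (y i) a * y j = spow (y i) (a - 1) * (y i * y j)" using sa by (simp add: mult.assoc)
    also have "\<dots> = spow (y i) (a - 1) * (y i * y k)" using rep1[OF that(1-5)] by simp
    also have "\<dots> = spow (y i) a * y k" using sa by (simp add: mult.assoc)
    finally show ?thesis .
  qed
  have rep: "spow (y i) a * spow (y j) n = spow (y i) a * spow (y k) n"
    if "i \<in> Y" "j \<in> Y" "k \<in> Y" "i < j" "i < k" "a \<ge> 1" "n \<ge> 1" for i j k a n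
    using that(7)
  proof (induction n rule: nat_induct_at_least)
    case base then show ?case using rep0[OF that(1-6)] by simp
  next
    case (Suc n)
    have ck: "spow (y k) n \<in> center" using yc Suc by simp
    have "spow (y i) a * spow (y j) (Suc n) = (spow (y i) a * spow (y j) n) * y j"
      using spow_Suc'[OF Suc(1), of "y j"] by (simp add: mult.assoc)
    also have "\<dots> = (spow (y i) a * spow (y k) n) * y j" using Suc by simp
    also have "\<dots> = (spow (y i) a * y j) * spow (y k) n"
      using centerD[OF ck, of "y j"] by (simp add: mult.assoc)
    also have "\<dots> = (spow (y i) a * y k) * spow (y k) n" using rep0[OF that(1-6)] by simp
    also have "\<dots> = spow (y i) a * spow (y k) (Suc n)"
      using spow_Suc[OF Suc(1), of "y k"] by (simp add: mult.assoc)
    finally show ?case .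
  qed
  define nx where "nx i = (LEAST k. k \<in> Y \<and> i < k)" for i
  have nx: "nx i \<in> Y \<and> i < nx i" for i
  proof -
    have "\<exists>k. k \<in> Y \<and> i < k" using unb by blast
    then show ?thesis unfolding nx_def by (rule LeastI_ex)
  qed
  define R where "R i a s = Rp i a s (nx i)" for i a s
  have Rk: "Rp i a s k = R i a s" if "i \<in> Y" "k \<in> Y" "i < k" "a \<ge> 1" for i k a s
  proof (cases "s = 0")
    case True then show ?thesis unfolding R_def Rp_def by simp
  next
    case False
    then show ?thesis unfolding R_def Rp_def using rep[OF that(1) nx[THEN conjunct1] that(2) nx[THEN conjunct2] that(3,4), of s]
      by simp
  qed
  have hB: "(\<forall>i\<in>Y. \<forall>j\<in>Y. R i a s = R j a s) \<or> (\<forall>i\<in>Y. \<forall>j\<in>Y. i < j \<longrightarrow> R i a s \<noteq> R j a s)"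
    if as: "(a, s) \<in> B" for a s
  proof -
    have a1: "a \<ge> 1" using as B_def by auto
    have hom: "homog (P (Some (a,s))) Y" using Yh as by auto
    have PR: "P (Some (a,s)) i j k \<longleftrightarrow> R i a s = R j a s"
      if "i \<in> Y" "j \<in> Y" "k \<in> Y" "i < j" "j < k" for i j k
    proof -
      have "Rp i a s k = R i a s" using Rk[OF that(1,3) _ a1] that by simp
      moreover have "Rp j a s k = R j a s" using Rk[OF that(2,3) that(5) a1] .
      ultimately show ?thesis unfolding P_def by simp
    qed
    show ?thesis
    proof (cases "\<forall>i\<in>Y. \<forall>j\<in>Y. \<forall>k\<in>Y. i < j \<longrightarrow> j < k \<longrightarrow> P (Some (a,s)) i j k")
      case True
      have lt: "R i a s = R j a s" if "i \<in> Y" "j \<in> Y" "i < j" for i j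
      proof -
        obtain k where "k \<in> Y" "j < k" using unb by blast
        then show ?thesis using True PR that by blast
      qed
      have "\<forall>i\<in>Y. \<forall>j\<in>Y. R i a s = R j a s"
      proof (intro ballI)
        fix i j assume "i \<in> Y" "j \<in> Y"
        then show "R i a s = R j a s" using lt by (metis nat_neq_iff)
      qed
      then show ?thesis by blast
    next
      case False
      then have allF: "\<forall>i\<in>Y. \<forall>j\<in>Y. \<forall>k\<in>Y. i < j \<longrightarrow> j < k \<longrightarrow> \<not> P (Some (a,s)) i j k"
        using hom unfolding homog_def by blast
      have "R i a s \<noteq> R j a s" if "i \<in> Y" "j \<in> Y" "i < j" for i j
      proof -
        obtain k where "k \<in> Y" "j < k" using unb by blast
        then show ?thesis using allF PR that by blast
      qed
      then show ?thesis by blast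
    qed
  qed
  have RZ: "R i a s \<in> Z" if "a \<ge> 1" for i a s
    unfolding R_def Rp_def using spow_Z[OF yZ] Z_mult that by auto
  have RH: "R i a s \<in> H" if "a \<ge> 1" "a \<ge> l \<or> s \<ge> l" for i a s
  proof (cases "a \<ge> l")
    case True
    then have "spow (y i) a \<in> H" using spow_ge_H[OF yZ] by simp
    moreover have "spow (y i) a \<in> Z" using spow_Z[OF yZ] that by simp
    ultimately show ?thesis unfolding R_def Rp_def using Z_ideal(2) spow_Z[OF yZ] by auto
  next
    case False
    then have sl: "s \<ge> l" "s \<noteq> 0" using that l1 by auto
    then have "spow (y (nx i)) s \<in> H" "spow (y (nx i)) s \<in> Z" using spow_ge_H[OF yZ] spow_Z[OF yZ] by auto
    then show ?thesis unfolding R_def Rp_def using Z_ideal(1) spow_Z[OF yZ] that sl by auto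
  qed
  have P1: "R i a s * R j a s = R i a (2*s+a)" if "i \<in> Y" "j \<in> Y" "i < j" "a \<ge> 1" for i j a s
  proof -
    obtain k where k: "k \<in> Y" "j < k" using unb by blast
    have Ri: "R i a s = Rp i a s k" using Rk[OF that(1) k(1) _ that(4)] that k by simp
    have Rj: "R j a s = Rp j a s k" using Rk[OF that(2) k that(4)] by simp
    have Rfin: "R i a (2*s+a) = Rp i a (2*s+a) k" using Rk[OF that(1) k(1) _ that(4)] that k by simp
    have rr: "spow (y i) a * spow (y j) a = spow (y i) a * spow (y k) a"
      using rep[OF that(1,2) k(1) that(3) _ that(4) that(4)] that k by simp
    show ?thesis
    proof (cases "s = 0")
      case True
      then show ?thesis using Ri Rj Rfin rr that(4) unfolding Rp_def by simp
    next
      case False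
      have ck: "spow (y k) s \<in> center" using yc False by simp
      have "R i a s * R j a s = (spow (y i) a * spow (y k) s) * (spow (y j) a * spow (y k) s)"
        using Ri Rj False unfolding Rp_def by simp
      also have "\<dots> = (spow (y i) a * spow (y j) a) * (spow (y k) s * spow (y k) s)"
        using swap4[OF ck] by simp
      also have "\<dots> = (spow (y i) a * spow (y k) a) * (spow (y k) s * spow (y k) s)"
        using rr by simp
      also have "\<dots> = (spow (y i) a * spow (y k) a) * spow (y k) (s + s)"
        using spow_add[of s s "y k"] False by simp
      also have "\<dots> = spow (y i) a * (spow (y k) a * spow (y k) (s + s))"
        by (simp add: mult.assoc)
      also have "\<dots> = spow (y i) a * spow (y k) (2*s+a)"
        using spow_add[of a "s+s" "y k"] that(4) False by (simp add: add.commute mult_2)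
      also have "\<dots> = R i a (2*s+a)" using Rfin that(4) unfolding Rp_def by simp
      finally show ?thesis .
    qed
  qed
  have P2: "R i a s * R i a s = R i (2*a) (2*s)" if "a \<ge> 1" for i a s
  proof (cases "s = 0")
    case True
    then show ?thesis unfolding R_def Rp_def using spow_add[OF that that, of "y i"] by (simp add: mult_2)
  next
    case False
    have ck: "spow (y (nx i)) s \<in> center" using yc False by simp
    have "R i a s * R i a s = (spow (y i) a * spow (y i) a) * (spow (y (nx i)) s * spow (y (nx i)) s)"
      unfolding R_def Rp_def using False swap4[OF ck] by simp
    also have "\<dots> = R i (2*a) (2*s)"
      unfolding R_def Rp_def using False spow_add[OF that that, of "y i"] spow_add[of s s "y (nx i)"] by (simp add: mult_2)
    finally show ?thesis .
  qed
  have D1: "\<exists>b\<in>Z. R i a (2*s+a) = R i a s * b" if "a \<ge> 1" for i a s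
  proof (cases "s = 0")
    case True
    then show ?thesis unfolding R_def Rp_def using that spow_Z[OF yZ that] by auto
  next
    case False
    have "R i a (2*s+a) = spow (y i) a * (spow (y (nx i)) s * spow (y (nx i)) (s+a))"
      unfolding R_def Rp_def using False that spow_add[of s "s+a" "y (nx i)"]
      by (simp add: mult_2 add.assoc)
    also have "\<dots> = R i a s * spow (y (nx i)) (s+a)"
      unfolding R_def Rp_def using False by (simp add: mult.assoc)
    finally show ?thesis using spow_Z[OF yZ, of "s+a"] that by auto
  qed
  have D2: "\<exists>b\<in>Z. R i (2*a) (2*s) = R i a s * b" if "a \<ge> 1" for i a s
    using P2[OF that, of i] RZ[OF that, of i s] by metis
  define J where "J = {p \<in> B. \<not> (\<forall>i\<in>Y. \<forall>j\<in>Y. R i (fst p) (snd p) = R j (fst p) (snd p))}"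
  have finJ: "finite J" using finB unfolding J_def by (rule finite_subset[rotated]) blast
  have injJ: "R i (fst p) (snd p) \<noteq> R j (fst p) (snd p)"
    if "p \<in> J" "i \<in> Y" "j \<in> Y" "i < j" for p i j
  proof -
    have pB: "(fst p, snd p) \<in> B" and nc: "\<not> (\<forall>i\<in>Y. \<forall>j\<in>Y. R i (fst p) (snd p) = R j (fst p) (snd p))"
      using that(1) unfolding J_def by auto
    have "\<forall>i\<in>Y. \<forall>j\<in>Y. i < j \<longrightarrow> R i (fst p) (snd p) \<noteq> R j (fst p) (snd p)"
      using hB[OF pB] nc by blast
    then show ?thesis using that(2-4) by blast
  qed
  have constJ: "R i (fst p) (snd p) = R j (fst p) (snd p)"
    if "p \<in> B" "p \<notin> J" "i \<in> Y" "j \<in> Y" for p i j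
  proof -
    have "\<forall>i\<in>Y. \<forall>j\<in>Y. R i (fst p) (snd p) = R j (fst p) (snd p)"
      using that(1,2) unfolding J_def by blast
    then show ?thesis using that(3,4) by blast
  qed
  obtain i1 where i1: "i1 \<in> Y" using unb by blast
  have "(1, 0) \<in> J"
  proof -
    have "(1, 0) \<in> B" unfolding B_def using l2 by auto
    moreover have "y i1 \<noteq> y (nx i1)" using y(1) nx[of i1] injD by fastforce
    then have "R i1 1 0 \<noteq> R (nx i1) 1 0"
      unfolding R_def Rp_def by simp
    moreover have "i1 \<in> Y" "nx i1 \<in> Y" using i1 nx[of i1] by auto
    ultimately have "(1::nat, 0::nat) \<in> B \<and> \<not> (\<forall>i\<in>Y. \<forall>j\<in>Y. R i 1 0 = R j 1 0)" by blast
    then show ?thesis unfolding J_def by simp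
  qed
  then have Jne: "J \<noteq> {}" by blast
  define M where "M = Max ((\<lambda>p. fst p + snd p) ` J)"
  have "M \<in> (\<lambda>p. fst p + snd p) ` J" unfolding M_def using finJ Jne by (intro Max_in) auto
  then obtain p where pJ: "p \<in> J" and pM: "fst p + snd p = M" by (rule imageE) simp
  have maxJ: "fst q + snd q \<le> M" if "q \<in> J" for q
    using Max_ge[of "(\<lambda>p. fst p + snd p) ` J"] finJ that M_def by auto
  define a where "a = fst p"
  define s where "s = snd p"
  have a1: "a \<ge> 1" and al: "a < l" and sl: "s < l" using pJ J_def B_def a_def s_def by auto
  have injY: "inj_on (\<lambda>i. R i a s) Y"
  proof (rule inj_onI)
    fix i j assume ij: "i \<in> Y" "j \<in> Y" "R i a s = R j a s"
    show "i = j"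
    proof (rule ccontr)
      assume "i \<noteq> j"
      then consider "i < j" | "j < i" by linarith
      then show False
        using injJ[OF pJ ij(1,2)] injJ[OF pJ ij(2,1)] ij(3) a_def s_def by cases auto
    qed
  qed
  define f1 where "f1 = R i1 a (2*s+a)"
  define f2 where "f2 = R i1 (2*a) (2*s)"
  have c1: "(\<forall>i\<in>Y. R i a (2*s+a) \<in> H) \<or> (\<forall>i\<in>Y. R i a (2*s+a) = f1)"
  proof (cases "(a, 2*s+a) \<in> B")
    case True
    have nJ: "(a, 2*s+a) \<notin> J"
    proof
      assume "(a, 2*s+a) \<in> J"
      then have "a + (2*s+a) \<le> a + s" using maxJ pM a_def s_def by fastforce
      then show False using a1 by simp
    qed
    have "\<forall>i\<in>Y. R i a (2*s+a) = f1"
    proof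
      fix i assume "i \<in> Y"
      then show "R i a (2*s+a) = f1" using constJ[OF True nJ \<open>i \<in> Y\<close> i1] f1_def by simp
    qed
    then show ?thesis by blast
  next
    case False
    then have "2*s+a \<ge> l" using a1 al by (simp add: B_def)
    then show ?thesis using RH[OF a1] by blast
  qed
  have c2: "(\<forall>i\<in>Y. R i (2*a) (2*s) \<in> H) \<or> (\<forall>i\<in>Y. R i (2*a) (2*s) = f2)"
  proof (cases "(2*a, 2*s) \<in> B")
    case True
    have nJ: "(2*a, 2*s) \<notin> J"
    proof
      assume "(2*a, 2*s) \<in> J"
      then have "2*a + 2*s \<le> a + s" using maxJ pM a_def s_def by fastforce
      then show False using a1 by simp
    qed
    have "\<forall>i\<in>Y. R i (2*a) (2*s) = f2"
    proof
      fix i assume "i \<in> Y"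
      then show "R i (2*a) (2*s) = f2" using constJ[OF True nJ \<open>i \<in> Y\<close> i1] f2_def by simp
    qed
    then show ?thesis by blast
  next
    case False
    then have "2*a \<ge> l \<or> 2*s \<ge> l" using a1 by (auto simp add: B_def)
    moreover have "2*a \<ge> 1" using a1 by simp
    ultimately show ?thesis using RH by blast
  qed
  define A where "A = (\<lambda>i. R i a s) ` Y - H"
  have AZ: "A \<subseteq> Z - H" using RZ a1 A_def by auto
  have "infinite ((\<lambda>i. R i a s) ` Y)" using injY Yinf finite_imageD by blast
  moreover have "(\<lambda>i. R i a s) ` Y \<inter> H \<subseteq> Z \<inter> H" using RZ a1 by auto
  then have "finite ((\<lambda>i. R i a s) ` Y \<inter> H)" using fin finite_subset by blast
  moreover have "A = (\<lambda>i. R i a s) ` Y - ((\<lambda>i. R i a s) ` Y \<inter> H)" unfolding A_def by auto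
  ultimately have Ainf: "infinite A" using Diff_infinite_finite by metis
  have cardF: "card {f1, f2} \<le> 2" by (cases "f1 = f2") auto
  have inFH1: "R i a (2*s+a) \<in> {f1, f2} \<union> H" if "i \<in> Y" for i
    using c1 that by blast
  have inFH2: "R i (2*a) (2*s) \<in> {f1, f2} \<union> H" if "i \<in> Y" for i
    using c2 that by blast
  show ?thesis
  proof (rule finish[OF AZ Ainf _ cardF])
    show "\<forall>w\<in>A. \<forall>w'\<in>A. w * w' \<in> {f1, f2} \<union> H"
    proof (intro ballI)
      fix w w' assume ww: "w \<in> A" "w' \<in> A"
      then obtain i j where ij: "i \<in> Y" "j \<in> Y" "w = R i a s" "w' = R j a s" unfolding A_def by blast
      consider "i < j" | "i = j" | "j < i" by linarith
      then show "w * w' \<in> {f1, f2} \<union> H"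
      proof cases
        case 1
        have "w * w' = R i a (2*s+a)" using P1[OF ij(1,2) 1 a1, of s] ij by simp
        then show ?thesis using inFH1[OF ij(1)] by simp
      next
        case 2
        have "w * w' = R i (2*a) (2*s)" using P2[OF a1, of i s] ij 2 by simp
        then show ?thesis using inFH2[OF ij(1)] by simp
      next
        case 3
        have "w \<in> center" using ZD RZ[OF a1] ij by blast
        then have "w * w' = w' * w" using centerD by blast
        also have "\<dots> = R j a (2*s+a)" using P1[OF ij(2,1) 3 a1, of s] ij by simp
        finally show ?thesis using inFH1[OF ij(2)] by simp
      qed
    qed
    show "\<forall>w\<in>A. \<forall>f\<in>{f1, f2}. f \<in> H \<or> (\<exists>b\<in>Z. f = w * b)"
    proof (intro ballI)
      fix w f assume w: "w \<in> A" and f: "f \<in> {f1, f2}"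
      then obtain i where i: "i \<in> Y" "w = R i a s" unfolding A_def by blast
      show "f \<in> H \<or> (\<exists>b\<in>Z. f = w * b)"
      proof (cases "f = f1")
        case True
        show ?thesis
        proof (cases "\<forall>i\<in>Y. R i a (2*s+a) \<in> H")
          case h: True
          then have "f1 \<in> H" using i1 f1_def by blast
          then show ?thesis using True by blast
        next
          case h: False
          then have "R i a (2*s+a) = f1" using c1 i(1) by blast
          then show ?thesis using D1[OF a1, of i s] True i(2) by metis
        qed
      next
        case False
        then have ff: "f = f2" using f by blast
        show ?thesis
        proof (cases "\<forall>i\<in>Y. R i (2*a) (2*s) \<in> H")
          case h: True
          then have "f2 \<in> H" using i1 f2_def by blast
          then show ?thesis using ff by blast
        next
          case h: False
          then have "R i (2*a) (2*s) = f2" using c2 i(1) by blast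
          then show ?thesis using D2[OF a1, of i s] ff i(2) by metis
        qed
      qed
    qed
  qed simp
qed

end

theorem mainTheorem18:
  fixes e :: "'a::semigroup_mult" and l :: nat
  assumes "periodic_sg TYPE('a)"
    and "e \<in> idempotents"
    and "l \<ge> 1"
    and "infinite (Zset e l - maxsubgroup e)"
  shows "\<exists>F' A'. F' \<subseteq> (UNIV :: 'a set) \<and> finite F' \<and> card F' \<le> 2 \<and>
           infinite A' \<and> A' \<subseteq> Zset e l \<and>
           setprod A' \<subseteq> F' \<union> maxsubgroup e \<and>
           A' \<inter> right_ideal1 F' = {}"
proof -
  interpret zsetup e l
    using assms(2,3) unfolding idempotents_def by unfold_locales auto
  have "GOAL"
  proof (cases "infinite (Zset e l \<inter> maxsubgroup e)")
    case True then show ?thesis by (rule case1)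
  next
    case fin: False
    show ?thesis
    proof (cases "\<exists>b\<in>Zset e l. infinite ((\<lambda>z. b * z) ` Zset e l)")
      case True
      then obtain b where "b \<in> Zset e l" "infinite ((\<lambda>z. b * z) ` Zset e l)" by blast
      then show ?thesis using case2a fin by blast
    next
      case False
      then show ?thesis using case2b fin assms(4) by blast
    qed
  qed
  then show ?thesis unfolding GOAL_def .
qed

end
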